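(* Let $a\geq 2$ be an integer and $m\geq 1$. The number of pyramids of size $m$ made of pieces of length $a$ (with bottom piece covering the interval $]0,a[$) equals $\binom{am-1}{m-1}$.
   Context: Fix an integer $a\geq 2$. A piece is an open interval $]s,s+a[$ of the real line with $s\in\mathbb Z$; two pieces are concurrent iff their intervals intersect. A heap (in the sense of Viennot) is a finite configuration obtained by successively dropping pieces vertically towards the horizontal axis: each dropped piece comes to rest either on the axis or on top of the highest previously placed piece whose interval intersects its own; two dropping orders give the same heap iff they produce the same configuration of placed pieces. Equivalently, a heap is the finite poset of placed pieces ordered by the transitive closure of "$\beta$ lies above $\alpha$ and their intervals intersect". A heap is a pyramid if it has a unique bottom (minimal) piece, i.e. exactly one piece rests on the axis. The size $|p|$ of a pyramid $p$ is its number of pieces. When not otherwise specified, a pyramid is assumed to have its bottom piece covering the interval $]0,a[$. *)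

theory Defs
  imports Main Complex_Main
begin

text \<open>A placed piece is a pair (s, h): the piece is the open interval ]s, s+a[ with
  s an integer, resting at level h (h = 0 means it lies on the horizontal axis).\<close>

definition concurrent :: "nat \<Rightarrow> int \<Rightarrow> int \<Rightarrow> bool" where
  "concurrent a s t \<longleftrightarrow>
     {real_of_int s <..< real_of_int s + real a} \<inter> {real_of_int t <..< real_of_int t + real a} \<noteq> {}"

definition drop_level :: "nat \<Rightarrow> int \<Rightarrow> (int \<times> nat) set \<Rightarrow> nat" where
  "drop_level a s C =
     (if \<exists>p\<in>C. concurrent a s (fst p)
      then Suc (Max {snd p | p. p \<in> C \<and> concurrent a s (fst p)})
      else 0)"

definition drop_piece :: "nat \<Rightarrow> int \<Rightarrow> (int \<times> nat) set \<Rightarrow> (int \<times> nat) set" where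
  "drop_piece a s C = insert (s, drop_level a s C) C"

inductive_set heaps :: "nat \<Rightarrow> (int \<times> nat) set set" for a :: nat where
  empty: "{} \<in> heaps a"
| drop: "C \<in> heaps a \<Longrightarrow> drop_piece a s C \<in> heaps a"

definition pyramid :: "(int \<times> nat) set \<Rightarrow> bool" where
  "pyramid C \<longleftrightarrow> {p \<in> C. snd p = 0} = {(0, 0)}"

end

theory Submission
  imports Defs
begin

definition conc :: "nat \<Rightarrow> int \<Rightarrow> int \<Rightarrow> bool" where
  "conc a s t \<longleftrightarrow> \<bar>s - t\<bar> < int a"

lemma concurrent_iff: "concurrent a s t \<longleftrightarrow> conc a s t"
proof
  assume "concurrent a s t"
  then obtain x where x: "x \<in> {real_of_int s <..< real_of_int s + real a}"
     "x \<in> {real_of_int t <..< real_of_int t + real a}"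
    unfolding concurrent_def by blast
  then have "real_of_int s < real_of_int t + real a" "real_of_int t < real_of_int s + real a" by auto
  then have "s < t + int a" "t < s + int a" by linarith+
  then show "conc a s t" unfolding conc_def by linarith
next
  assume "conc a s t"
  then have h: "s < t + int a" "t < s + int a" unfolding conc_def by linarith+
  define x where "x = real_of_int (max s t) + 1/2"
  have "x \<in> {real_of_int s <..< real_of_int s + real a}"
    "x \<in> {real_of_int t <..< real_of_int t + real a}"
    using h unfolding x_def by (auto simp: max_def)
  then show "concurrent a s t" unfolding concurrent_def by blast
qed

lemma conc_sym: "conc a s t \<Longrightarrow> conc a t s"
  unfolding conc_def by linarith

lemma conc_refl: "0 < a \<Longrightarrow> conc a s s"
  unfolding conc_def by simp

function lev :: "nat \<Rightarrow> (int \<times> nat) set \<Rightarrow> int \<times> nat \<Rightarrow> nat" where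
  "lev a C x = (if \<exists>y\<in>C. snd y < snd x \<and> conc a (fst x) (fst y)
     then Suc (Max (lev a C ` {y\<in>C. snd y < snd x \<and> conc a (fst x) (fst y)})) else 0)"
  by auto
termination by (relation "measure (\<lambda>(a,C,x). snd x)") auto

declare lev.simps[simp del]

definition dprio :: "nat \<Rightarrow> (int \<times> nat) set \<Rightarrow> bool" where
  "dprio a C \<longleftrightarrow> (\<forall>x\<in>C. \<forall>y\<in>C. conc a (fst x) (fst y) \<and> snd x = snd y \<longrightarrow> x = y)"

definition wfh :: "nat \<Rightarrow> (int \<times> nat) set \<Rightarrow> bool" where
  "wfh a C \<longleftrightarrow> finite C \<and> dprio a C \<and>
     (\<forall>x\<in>C. 0 < snd x \<longrightarrow> (\<exists>y\<in>C. snd y = snd x - 1 \<and> conc a (fst x) (fst y)))"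

definition norm :: "nat \<Rightarrow> (int \<times> nat) set \<Rightarrow> (int \<times> nat) set" where
  "norm a C = (\<lambda>x. (fst x, lev a C x)) ` C"

lemma lev_mono:
  assumes "finite C" "y \<in> C" "snd y < snd x" "conc a (fst x) (fst y)"
  shows "lev a C y < lev a C x"
proof -
  let ?S = "{y\<in>C. snd y < snd x \<and> conc a (fst x) (fst y)}"
  have "y \<in> ?S" using assms by auto
  moreover have "finite ?S" using assms(1) by auto
  ultimately have "lev a C y \<le> Max (lev a C ` ?S)" by (intro Max_ge) auto
  moreover have "lev a C x = Suc (Max (lev a C ` ?S))"
    using assms by (subst lev.simps) auto
  ultimately show ?thesis by simp
qed

lemma lev_zero_iff:
  "lev a C x = 0 \<longleftrightarrow> \<not> (\<exists>y\<in>C. snd y < snd x \<and> conc a (fst x) (fst y))"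
  by (subst lev.simps) auto

lemma lev_pos_eq:
  assumes "\<exists>y\<in>C. snd y < snd x \<and> conc a (fst x) (fst y)"
  shows "lev a C x = Suc (Max (lev a C ` {y\<in>C. snd y < snd x \<and> conc a (fst x) (fst y)}))"
  by (subst lev.simps) (simp only: assms if_True)

lemma lev_pos_support:
  assumes "finite C" "0 < lev a C x"
  shows "\<exists>y\<in>C. snd y < snd x \<and> conc a (fst x) (fst y) \<and> lev a C y = lev a C x - 1"
proof -
  let ?S = "{y\<in>C. snd y < snd x \<and> conc a (fst x) (fst y)}"
  have ex: "\<exists>y\<in>C. snd y < snd x \<and> conc a (fst x) (fst y)" using assms(2) lev_zero_iff[of a C x] by linarith
  then obtain y0 where "y0 \<in> ?S" by blast
  then have ne: "?S \<noteq> {}" by blast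
  from ex have eq: "lev a C x = Suc (Max (lev a C ` ?S))" by (rule lev_pos_eq)
  have "Max (lev a C ` ?S) \<in> lev a C ` ?S"
    using ne assms(1) by (intro Max_in) auto
  then obtain y where "y \<in> ?S" "lev a C y = Max (lev a C ` ?S)" by auto
  then show ?thesis using eq by auto
qed

lemma norm_wfh:
  assumes a: "0 < a" and fin: "finite C" and dp: "dprio a C"
  shows "wfh a (norm a C)"
  unfolding wfh_def
proof (intro conjI ballI impI)
  show "finite (norm a C)" using fin unfolding norm_def by simp
next
  show "dprio a (norm a C)"
    unfolding dprio_def
  proof (intro ballI impI)
    fix u v assume uv: "u \<in> norm a C" "v \<in> norm a C" "conc a (fst u) (fst v) \<and> snd u = snd v"
    obtain x where x: "x \<in> C" "u = (fst x, lev a C x)" using uv unfolding norm_def by auto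
    obtain y where y: "y \<in> C" "v = (fst y, lev a C y)" using uv unfolding norm_def by auto
    have c: "conc a (fst x) (fst y)" and l: "lev a C x = lev a C y" using uv x y by auto
    have "x = y"
    proof (cases "snd x = snd y")
      case True then show ?thesis using dp x y c unfolding dprio_def by blast
    next
      case False
      then have "snd x < snd y \<or> snd y < snd x" by auto
      then show ?thesis using lev_mono[OF fin, of x y a] lev_mono[OF fin, of y x a] x y c l conc_sym
        by fastforce
    qed
    then show "u = v" using x y by simp
  qed
next
  fix z assume z: "z \<in> norm a C" "0 < snd z"
  then obtain x where x: "x \<in> C" "z = (fst x, lev a C x)" unfolding norm_def by auto
  then obtain y where y: "y \<in> C" "conc a (fst x) (fst y)" "lev a C y = lev a C x - 1"
    using lev_pos_support[OF fin, of a x] z by auto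
  show "\<exists>y\<in>norm a C. snd y = snd z - 1 \<and> conc a (fst z) (fst y)"
    using y x unfolding norm_def by (intro bexI[of _ "(fst y, lev a C y)"]) auto
qed

lemma card_norm:
  assumes a: "0 < a" and fin: "finite C" and dp: "dprio a C"
  shows "card (norm a C) = card C"
  unfolding norm_def
proof (rule card_image, rule inj_onI)
  fix x y assume xy: "x \<in> C" "y \<in> C" "(fst x, lev a C x) = (fst y, lev a C y)"
  have c: "conc a (fst x) (fst y)" using xy conc_refl[OF a] by auto
  show "x = y"
  proof (cases "snd x = snd y")
    case True then show ?thesis using dp xy c unfolding dprio_def by blast
  next
    case False
    then have "snd x < snd y \<or> snd y < snd x" by auto
    then show ?thesis using lev_mono[OF fin, of x y a] lev_mono[OF fin, of y x a] xy c conc_sym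
      by fastforce
  qed
qed

lemma lev_wfh:
  assumes w: "wfh a C"
  shows "x \<in> C \<Longrightarrow> lev a C x = snd x"
proof (induction "snd x" arbitrary: x rule: less_induct)
  case less
  have fin: "finite C" using w unfolding wfh_def by auto
  let ?S = "{y\<in>C. snd y < snd x \<and> conc a (fst x) (fst y)}"
  have img: "lev a C ` ?S = snd ` ?S" using less.hyps by (auto intro!: image_cong)
  show ?case
  proof (cases "snd x = 0")
    case True then show ?thesis by (subst lev.simps) auto
  next
    case False
    then obtain y where y: "y \<in> C" "snd y = snd x - 1" "conc a (fst x) (fst y)"
      using w less.prems unfolding wfh_def by auto
    have "y \<in> ?S" using y False by simp
    then have ne: "?S \<noteq> {}" by blast
    have "Max (snd ` ?S) = snd x - 1"
    proof (rule Max_eqI)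
      show "finite (snd ` ?S)" using fin by auto
      show "snd x - 1 \<in> snd ` ?S" using y False by (intro image_eqI[of _ _ y]) auto
    qed auto
    moreover have "\<exists>y\<in>C. snd y < snd x \<and> conc a (fst x) (fst y)" using ne by blast
    ultimately show ?thesis using False img lev_pos_eq[of C x a] by auto
  qed
qed

lemma norm_wfh_id: "wfh a C \<Longrightarrow> norm a C = C"
  unfolding norm_def using lev_wfh[of a C] by force

lemma lev_transport:
  assumes fin: "finite C" and dp: "dprio a C"
    and mono: "\<And>x y. x \<in> C \<Longrightarrow> y \<in> C \<Longrightarrow> conc a (fst x) (fst y) \<Longrightarrow> snd x < snd y \<Longrightarrow> \<phi> x < \<phi> y"
  shows "x \<in> C \<Longrightarrow> lev a ((\<lambda>x. (fst x, \<phi> x)) ` C) (fst x, \<phi> x) = lev a C x"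
proof (induction "snd x" arbitrary: x rule: less_induct)
  case less
  let ?D = "(\<lambda>x. (fst x, \<phi> x)) ` C"
  let ?S = "{y\<in>C. snd y < snd x \<and> conc a (fst x) (fst y)}"
  let ?T = "{z\<in>?D. snd z < \<phi> x \<and> conc a (fst x) (fst z)}"
  have ST: "?T = (\<lambda>x. (fst x, \<phi> x)) ` ?S"
  proof (intro equalityI subsetI)
    fix z assume "z \<in> ?T"
    then obtain y where y: "y \<in> C" "z = (fst y, \<phi> y)" "\<phi> y < \<phi> x" "conc a (fst x) (fst y)" by auto
    have "snd y < snd x"
    proof (rule ccontr)
      assume "\<not> snd y < snd x"
      then have "snd x < snd y \<or> snd x = snd y" by auto
      then show False
      proof
        assume "snd x < snd y" then have "\<phi> x < \<phi> y" using mono[of x y] less.prems y by auto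
        then show False using y by auto
      next
        assume "snd x = snd y" then have "x = y" using dp less.prems y unfolding dprio_def by blast
        then show False using y by auto
      qed
    qed
    then show "z \<in> (\<lambda>x. (fst x, \<phi> x)) ` ?S" using y by auto
  next
    fix z assume "z \<in> (\<lambda>x. (fst x, \<phi> x)) ` ?S"
    then obtain y where y: "y \<in> C" "z = (fst y, \<phi> y)" "snd y < snd x" "conc a (fst x) (fst y)" by auto
    have "\<phi> y < \<phi> x" using mono[of y x] y less.prems conc_sym by auto
    then show "z \<in> ?T" using y by auto
  qed
  have img: "lev a ?D ` ?T = lev a C ` ?S"
    unfolding ST image_image using less.hyps by (auto intro!: image_cong)
  have ex: "(\<exists>z\<in>?D. snd z < \<phi> x \<and> conc a (fst x) (fst z)) \<longleftrightarrow> (\<exists>y\<in>C. snd y < snd x \<and> conc a (fst x) (fst y))"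
    using ST by blast
  show ?case
    using lev.simps[of a ?D "(fst x, \<phi> x)"] lev.simps[of a C x] img ex by simp
qed

lemma norm_transport:
  assumes fin: "finite C" and dp: "dprio a C"
    and mono: "\<And>x y. x \<in> C \<Longrightarrow> y \<in> C \<Longrightarrow> conc a (fst x) (fst y) \<Longrightarrow> snd x < snd y \<Longrightarrow> \<phi> x < \<phi> y"
  shows "norm a ((\<lambda>x. (fst x, \<phi> x)) ` C) = norm a C"
proof -
  have "\<And>x. x \<in> C \<Longrightarrow> lev a ((\<lambda>x. (fst x, \<phi> x)) ` C) (fst x, \<phi> x) = lev a C x"
    using lev_transport[of C a \<phi>] fin dp mono by blast
  then show ?thesis unfolding norm_def image_image by (auto intro!: image_cong)
qed


lemma drop_level_conc: "drop_level a s C = (if \<exists>p\<in>C. conc a s (fst p)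
      then Suc (Max {snd p | p. p \<in> C \<and> conc a s (fst p)}) else 0)"
  unfolding drop_level_def concurrent_iff ..

lemma wfh_drop:
  assumes w: "wfh a C"
  shows "wfh a (drop_piece a s C)"
proof -
  let ?M = "{snd p | p. p \<in> C \<and> conc a s (fst p)}"
  have fin: "finite C" using w unfolding wfh_def by auto
  have "?M \<subseteq> snd ` C" by force
  then have finM: "finite ?M" using fin finite_subset by blast
  define L where "L = drop_level a s C"
  have above: "snd p < L" if "p \<in> C" "conc a s (fst p)" for p
  proof -
    have "snd p \<in> ?M" using that by blast
    then have "snd p \<le> Max ?M" using finM by simp
    moreover have "L = Suc (Max ?M)" using that unfolding L_def drop_level_conc by auto
    ultimately show ?thesis by simp
  qed
  have supp: "\<exists>p\<in>C. snd p = L - 1 \<and> conc a s (fst p)" if "0 < L"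
  proof -
    have ex: "\<exists>p\<in>C. conc a s (fst p)" using that unfolding L_def drop_level_conc by (auto split: if_splits)
    then obtain p0 where "p0 \<in> C" "conc a s (fst p0)" by blast
    then have "snd p0 \<in> ?M" by blast
    then have ne: "?M \<noteq> {}" by blast
    have "Max ?M \<in> ?M" using finM ne by (rule Max_in)
    then obtain p where p: "p \<in> C" "conc a s (fst p)" "Max ?M = snd p" by blast
    moreover have "L = Suc (Max ?M)" using ex unfolding L_def drop_level_conc by auto
    ultimately show ?thesis by (intro bexI[of _ p]) auto
  qed
  show ?thesis
    unfolding drop_piece_def L_def[symmetric] wfh_def
  proof (intro conjI)
    show "finite (insert (s, L) C)" using fin by simp
    show "dprio a (insert (s, L) C)"
      unfolding dprio_def
    proof (intro ballI impI)
      fix x y assume xy: "x \<in> insert (s, L) C" "y \<in> insert (s, L) C" "conc a (fst x) (fst y) \<and> snd x = snd y"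
      show "x = y"
      proof (cases "x = (s, L)")
        case True
        show ?thesis
        proof (rule ccontr)
          assume "x \<noteq> y"
          then have "y \<in> C" using xy True by auto
          then have "snd y < L" using above[of y] xy True by auto
          then show False using xy True by auto
        qed
      next
        case False
        show ?thesis
        proof (cases "y = (s, L)")
          case True
          then have "x \<in> C" using xy False by auto
          then have "snd x < L" using above[of x] xy True conc_sym by auto
          then show ?thesis using xy True by auto
        next
          case False
          then show ?thesis using xy \<open>x \<noteq> (s, L)\<close> w unfolding wfh_def dprio_def by auto
        qed
      qed
    qed
    show "\<forall>x\<in>insert (s, L) C. 0 < snd x \<longrightarrow> (\<exists>y\<in>insert (s, L) C. snd y = snd x - 1 \<and> conc a (fst x) (fst y))"
    proof (intro ballI impI)
      fix x assume x: "x \<in> insert (s, L) C" "0 < snd x"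
      show "\<exists>y\<in>insert (s, L) C. snd y = snd x - 1 \<and> conc a (fst x) (fst y)"
      proof (cases "x = (s, L)")
        case True then show ?thesis using supp x by auto
      next
        case False then have "x \<in> C" using x by auto
        then show ?thesis using w x unfolding wfh_def by blast
      qed
    qed
  qed
qed

lemma heaps_wfh1: "C \<in> heaps a \<Longrightarrow> wfh a C"
proof (induction rule: heaps.induct)
  case empty then show ?case unfolding wfh_def dprio_def by auto
next
  case (drop C s) then show ?case using wfh_drop by blast
qed

lemma heaps_wfh2:
  assumes "wfh a C"
  shows "C \<in> heaps a"
  using assms
proof (induction "card C" arbitrary: C)
  case 0
  then have "C = {}" unfolding wfh_def by auto
  then show ?case by (simp add: heaps.empty)
next
  case (Suc n)
  have fin: "finite C" and dp: "dprio a C" and sp: "\<forall>x\<in>C. 0 < snd x \<longrightarrow> (\<exists>y\<in>C. snd y = snd x - 1 \<and> conc a (fst x) (fst y))"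
    using Suc.prems unfolding wfh_def by auto
  have ne: "C \<noteq> {}" using Suc.hyps(2) by auto
  have "Max (snd ` C) \<in> snd ` C" using fin ne by auto
  then obtain x where x: "x \<in> C" "snd x = Max (snd ` C)" by auto
  have xmax: "snd y \<le> snd x" if "y \<in> C" for y using x that fin by simp
  let ?C' = "C - {x}"
  have w': "wfh a ?C'"
    unfolding wfh_def
  proof (intro conjI ballI impI)
    show "finite ?C'" using fin by simp
    show "dprio a ?C'" using dp unfolding dprio_def by blast
    fix y assume y: "y \<in> ?C'" "0 < snd y"
    then obtain z where z: "z \<in> C" "snd z = snd y - 1" "conc a (fst y) (fst z)" using sp by auto
    have "z \<noteq> x" using z y xmax[of y] by auto
    then show "\<exists>z\<in>?C'. snd z = snd y - 1 \<and> conc a (fst y) (fst z)" using z by auto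
  qed
  have c': "n = card ?C'" using Suc.hyps(2) x fin by simp
  have IH: "?C' \<in> heaps a" using Suc.hyps(1)[OF c' w'] .
  let ?M = "{snd p | p. p \<in> ?C' \<and> conc a (fst x) (fst p)}"
  have below: "snd p < snd x" if "p \<in> ?C'" "conc a (fst x) (fst p)" for p
  proof -
    have "snd p \<noteq> snd x"
    proof
      assume "snd p = snd x"
      then have "x = p" using dp that x(1) unfolding dprio_def by (metis DiffD1)
      then show False using that by auto
    qed
    then show ?thesis using xmax[of p] that by auto
  qed
  have lev: "drop_level a (fst x) ?C' = snd x"
  proof (cases "snd x = 0")
    case True
    then have "\<not> (\<exists>p\<in>?C'. conc a (fst x) (fst p))" using below by fastforce
    then show ?thesis unfolding drop_level_conc using True by simp
  next
    case False
    then obtain z where z: "z \<in> C" "snd z = snd x - 1" "conc a (fst x) (fst z)" using sp x by auto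
    have zx: "z \<in> ?C'" using z False by auto
    have "Max ?M = snd x - 1"
    proof (rule Max_eqI)
      have "?M \<subseteq> snd ` C" by force
      then show "finite ?M" using fin finite_subset by blast
      have "snd z \<in> ?M" using zx z(3) by blast
      then show "snd x - 1 \<in> ?M" using z(2) by simp
      fix m assume "m \<in> ?M"
      then obtain p where "p \<in> ?C'" "conc a (fst x) (fst p)" "m = snd p" by blast
      then show "m \<le> snd x - 1" using below[of p] by auto
    qed
    then show ?thesis unfolding drop_level_conc using zx z False by auto
  qed
  have "drop_piece a (fst x) ?C' = C"
    unfolding drop_piece_def lev prod.collapse using x(1) by (simp add: insert_absorb)
  then show ?case using heaps.drop[OF IH, of "fst x"] by simp
qed

lemma heaps_wfh: "C \<in> heaps a \<longleftrightarrow> wfh a C"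
  using heaps_wfh1 heaps_wfh2 by blast


definition base :: "(int \<times> nat) set \<Rightarrow> int set" where
  "base C = {s. (s, 0) \<in> C}"

definition sh :: "(int \<times> nat) set \<Rightarrow> (int \<times> nat) set" where
  "sh H = (\<lambda>x. (fst x, Suc (snd x))) ` H"

definition Phi :: "nat \<Rightarrow> int \<Rightarrow> (int \<times> nat) set \<Rightarrow> (int \<times> nat) set" where
  "Phi a r H = norm a (insert (r, 0) (sh H))"

definition Psi :: "nat \<Rightarrow> int \<Rightarrow> (int \<times> nat) set \<Rightarrow> (int \<times> nat) set" where
  "Psi a r H = norm a (H - {(r, 0)})"

lemma dprio_subset: "dprio a C \<Longrightarrow> D \<subseteq> C \<Longrightarrow> dprio a D"
  unfolding dprio_def by blast

lemma sh_props:
  assumes w: "wfh a H"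
  shows "finite (insert (r, 0) (sh H))" "dprio a (insert (r, 0) (sh H))"
    "card (insert (r, 0) (sh H)) = Suc (card H)" "(r, 0) \<notin> sh H"
    "finite (sh H)" "dprio a (sh H)"
proof -
  have fin: "finite H" and dp: "dprio a H" using w unfolding wfh_def by auto
  show nin: "(r, 0) \<notin> sh H" unfolding sh_def by auto
  show "finite (sh H)" using fin unfolding sh_def by simp
  then show "finite (insert (r, 0) (sh H))" by simp
  have inj: "inj_on (\<lambda>x. (fst x, Suc (snd x))) H" by (rule inj_onI) (auto simp: prod_eq_iff)
  show "card (insert (r, 0) (sh H)) = Suc (card H)"
    using nin \<open>finite (sh H)\<close> card_image[OF inj] unfolding sh_def by simp
  show dsh: "dprio a (sh H)"
    unfolding dprio_def sh_def
  proof (intro ballI impI)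
    fix u v assume uv: "u \<in> (\<lambda>x. (fst x, Suc (snd x))) ` H" "v \<in> (\<lambda>x. (fst x, Suc (snd x))) ` H"
      "conc a (fst u) (fst v) \<and> snd u = snd v"
    then obtain x y where "x \<in> H" "y \<in> H" "u = (fst x, Suc (snd x))" "v = (fst y, Suc (snd y))" by auto
    moreover have "x = y" using dp calculation uv unfolding dprio_def by auto
    ultimately show "u = v" by simp
  qed
  show "dprio a (insert (r, 0) (sh H))"
    unfolding dprio_def
  proof (intro ballI impI)
    fix u v assume uv: "u \<in> insert (r, 0) (sh H)" "v \<in> insert (r, 0) (sh H)"
      "conc a (fst u) (fst v) \<and> snd u = snd v"
    have pos: "0 < snd z" if "z \<in> sh H" for z using that unfolding sh_def by auto
    show "u = v"
    proof (cases "u = (r, 0)")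
      case True then show ?thesis using uv pos by (cases "v = (r, 0)") fastforce+
    next
      case False
      then have "u \<in> sh H" using uv by auto
      moreover have "v \<in> sh H" using uv pos calculation by (cases "v = (r,0)") fastforce+
      ultimately show ?thesis using dsh uv unfolding dprio_def by blast
    qed
  qed
qed

lemma Phi_wfh:
  assumes a: "0 < a" and w: "wfh a H"
  shows "wfh a (Phi a r H)" "card (Phi a r H) = Suc (card H)"
  unfolding Phi_def using norm_wfh[OF a] card_norm[OF a] sh_props[OF w] by auto

lemma Phi_base:
  assumes a: "0 < a" and w: "wfh a H"
  shows "base (Phi a r H) = insert r {s \<in> base H. \<not> conc a r s}"
proof -
  let ?D = "insert (r, 0) (sh H)"
  have fin: "finite ?D" using sh_props[OF w] by auto
  have sp: "\<forall>x\<in>H. 0 < snd x \<longrightarrow> (\<exists>y\<in>H. snd y = snd x - 1 \<and> conc a (fst x) (fst y))"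
    using w unfolding wfh_def by auto
  have l0: "lev a ?D (r, 0) = 0" using lev_zero_iff by auto
  have key: "lev a ?D (t, Suc h) = 0 \<longleftrightarrow> h = 0 \<and> \<not> conc a r t" if th: "(t, h) \<in> H" for t h
  proof
    assume z: "lev a ?D (t, Suc h) = 0"
    then have nex: "\<not> (\<exists>y\<in>?D. snd y < Suc h \<and> conc a t (fst y))" using lev_zero_iff[of a ?D "(t, Suc h)"] by simp
    have "h = 0"
    proof (rule ccontr)
      assume "h \<noteq> 0"
      then obtain y where y: "y \<in> H" "snd y = h - 1" "conc a t (fst y)" using sp th by fastforce
      then have "(fst y, Suc (snd y)) \<in> ?D" unfolding sh_def by auto
      moreover have "Suc (snd y) < Suc h" using y \<open>h \<noteq> 0\<close> by simp
      ultimately show False using nex y by fastforce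
    qed
    moreover have "\<not> conc a r t" using nex conc_sym by fastforce
    ultimately show "h = 0 \<and> \<not> conc a r t" by simp
  next
    assume "h = 0 \<and> \<not> conc a r t"
    moreover have "\<And>y. y \<in> sh H \<Longrightarrow> 0 < snd y" unfolding sh_def by auto
    ultimately show "lev a ?D (t, Suc h) = 0" using lev_zero_iff[of a ?D "(t, Suc h)"] conc_sym by fastforce
  qed
  show ?thesis
  proof (intro equalityI subsetI)
    fix s assume "s \<in> base (Phi a r H)"
    then have "(s, 0) \<in> norm a ?D" unfolding base_def Phi_def by simp
    then obtain x where x0: "x \<in> ?D" "(s, 0) = (fst x, lev a ?D x)" unfolding norm_def by (rule imageE)
    then have x: "x \<in> ?D" "s = fst x" "lev a ?D x = 0" by auto
    show "s \<in> insert r {s \<in> base H. \<not> conc a r s}"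
    proof (cases "x = (r, 0)")
      case True then show ?thesis using x by simp
    next
      case False
      then have "x \<in> sh H" using x by auto
      then obtain y where y: "y \<in> H" "x = (fst y, Suc (snd y))" unfolding sh_def by (rule imageE)
      have th: "(fst y, snd y) \<in> H" using y by simp
      then have "snd y = 0 \<and> \<not> conc a r (fst y)" using key[OF th] x y by simp
      then show ?thesis using th x y unfolding base_def by auto
    qed
  next
    fix s assume s: "s \<in> insert r {s \<in> base H. \<not> conc a r s}"
    show "s \<in> base (Phi a r H)"
    proof (cases "s = r")
      case True
      have "(r, lev a ?D (r, 0)) \<in> norm a ?D" unfolding norm_def by force
      then show ?thesis using True l0 unfolding base_def Phi_def by simp
    next
      case False
      then have s0: "(s, 0) \<in> H" "\<not> conc a r s" using s unfolding base_def by auto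
      then have "(s, Suc 0) \<in> ?D" unfolding sh_def by force
      then have "(s, lev a ?D (s, Suc 0)) \<in> norm a ?D" unfolding norm_def by force
      moreover have "lev a ?D (s, Suc 0) = 0" using key[OF s0(1)] s0 by simp
      ultimately show ?thesis unfolding base_def Phi_def by simp
    qed
  qed
qed

lemma Psi_props:
  assumes a: "0 < a" and w: "wfh a H" and r: "(r, 0) \<in> H"
  shows "wfh a (Psi a r H)" "card (Psi a r H) = card H - 1"
    "base (Psi a r H) \<subseteq> (base H - {r}) \<union> {s. conc a r s}"
proof -
  let ?H0 = "H - {(r, 0)}"
  have fin: "finite H" and dp: "dprio a H" and sp: "\<forall>x\<in>H. 0 < snd x \<longrightarrow> (\<exists>y\<in>H. snd y = snd x - 1 \<and> conc a (fst x) (fst y))"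
    using w unfolding wfh_def by auto
  have fin0: "finite ?H0" and dp0: "dprio a ?H0" using fin dp dprio_subset by auto
  show "wfh a (Psi a r H)" unfolding Psi_def using norm_wfh[OF a fin0 dp0] .
  show "card (Psi a r H) = card H - 1" unfolding Psi_def using card_norm[OF a fin0 dp0] fin r by simp
  show "base (Psi a r H) \<subseteq> (base H - {r}) \<union> {s. conc a r s}"
  proof
    fix s assume "s \<in> base (Psi a r H)"
    then have "(s, 0) \<in> norm a ?H0" unfolding base_def Psi_def by simp
    then obtain x where x0: "x \<in> ?H0" "(s, 0) = (fst x, lev a ?H0 x)" unfolding norm_def by (rule imageE)
    then have x: "x \<in> ?H0" "s = fst x" "lev a ?H0 x = 0" by auto
    show "s \<in> (base H - {r}) \<union> {s. conc a r s}"
    proof (cases "snd x = 0")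
      case True
      have "x = (s, 0)" using True x by (simp add: prod_eq_iff)
      then have "(s, 0) \<in> H" "(s, 0) \<noteq> (r, 0)" using x by auto
      then show ?thesis unfolding base_def by auto
    next
      case False
      then obtain y where y: "y \<in> H" "snd y = snd x - 1" "conc a (fst x) (fst y)" using sp x by auto
      have "y \<notin> ?H0"
      proof
        assume "y \<in> ?H0"
        moreover have "snd y < snd x" using y False by simp
        ultimately have "\<exists>y\<in>?H0. snd y < snd x \<and> conc a (fst x) (fst y)" using y(3) by blast
        then show False using x lev_zero_iff by auto
      qed
      then have "y = (r, 0)" using y by auto
      then show ?thesis using y x conc_sym by auto
    qed
  qed
qed

lemma Psi_Phi:
  assumes a: "0 < a" and w: "wfh a H"
  shows "Psi a r (Phi a r H) = H"
proof -
  let ?D = "insert (r, 0) (sh H)"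
  have finD: "finite ?D" and dpD: "dprio a ?D" and nin: "(r, 0) \<notin> sh H"
    and fsh: "finite (sh H)" and dsh: "dprio a (sh H)" using sh_props[OF w] by auto
  have fin: "finite H" and dp: "dprio a H" using w unfolding wfh_def by auto
  have l0: "lev a ?D (r, 0) = 0" using lev_zero_iff by auto
  have img: "norm a ?D = insert (r, 0) ((\<lambda>x. (fst x, lev a ?D x)) ` sh H)"
    unfolding norm_def using l0 by simp
  have notin: "(r, 0) \<notin> (\<lambda>x. (fst x, lev a ?D x)) ` sh H"
  proof
    assume "(r, 0) \<in> (\<lambda>x. (fst x, lev a ?D x)) ` sh H"
    then obtain x where x: "x \<in> sh H" "fst x = r" "lev a ?D x = 0" by auto
    have "0 < snd x" using x unfolding sh_def by auto
    then have "lev a ?D (r, 0) < lev a ?D x" using lev_mono[OF finD, of "(r,0)" x a] x conc_refl[OF a] by auto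
    then show False using x by simp
  qed
  have E: "Phi a r H - {(r, 0)} = (\<lambda>x. (fst x, lev a ?D x)) ` sh H"
    unfolding Phi_def img using notin by auto
  have "norm a ((\<lambda>x. (fst x, lev a ?D x)) ` sh H) = norm a (sh H)"
  proof (rule norm_transport[OF fsh dsh])
    fix x y assume "x \<in> sh H" "y \<in> sh H" "conc a (fst x) (fst y)" "snd x < snd y"
    then show "lev a ?D x < lev a ?D y" using lev_mono[OF finD, of x y a] conc_sym by auto
  qed
  also have "\<dots> = norm a H"
    unfolding sh_def by (rule norm_transport[OF fin dp]) auto
  also have "\<dots> = H" using norm_wfh_id[OF w] .
  finally show ?thesis unfolding Psi_def E .
qed

lemma Phi_Psi:
  assumes a: "0 < a" and w: "wfh a H" and r: "(r, 0) \<in> H"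
  shows "Phi a r (Psi a r H) = H"
proof -
  let ?H0 = "H - {(r, 0)}"
  have fin: "finite H" and dp: "dprio a H" using w unfolding wfh_def by auto
  have fin0: "finite ?H0" and dp0: "dprio a ?H0" using fin dp dprio_subset by auto
  define \<phi> where "\<phi> x = (if x = (r, 0) then 0 else Suc (lev a ?H0 x))" for x
  have Hins: "H = insert (r, 0) ?H0" using r by auto
  have "insert (r, 0) (sh (Psi a r H)) = (\<lambda>x. (fst x, \<phi> x)) ` H"
  proof -
    have "sh (Psi a r H) = (\<lambda>x. (fst x, \<phi> x)) ` ?H0"
      unfolding sh_def Psi_def norm_def image_image \<phi>_def by (auto intro!: image_cong)
    moreover have "(\<lambda>x. (fst x, \<phi> x)) ` H = insert (r, 0) ((\<lambda>x. (fst x, \<phi> x)) ` ?H0)"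
    proof -
      have "\<phi> (r, 0) = 0" unfolding \<phi>_def by simp
      then show ?thesis by (subst Hins) (simp only: image_insert fst_conv)
    qed
    ultimately show ?thesis by simp
  qed
  then have "Phi a r (Psi a r H) = norm a ((\<lambda>x. (fst x, \<phi> x)) ` H)" unfolding Phi_def by simp
  also have "\<dots> = norm a H"
  proof (rule norm_transport[OF fin dp])
    fix x y assume xy: "x \<in> H" "y \<in> H" "conc a (fst x) (fst y)" "snd x < snd y"
    have yr: "y \<noteq> (r, 0)" using xy by auto
    show "\<phi> x < \<phi> y"
    proof (cases "x = (r, 0)")
      case True then show ?thesis using yr unfolding \<phi>_def by simp
    next
      case False
      then have "x \<in> ?H0" "y \<in> ?H0" using xy yr by auto
      then have "lev a ?H0 x < lev a ?H0 y" using lev_mono[OF fin0, of x y a] xy conc_sym by auto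
      then show ?thesis using False yr unfolding \<phi>_def by simp
    qed
  qed
  also have "\<dots> = H" using norm_wfh_id[OF w] .
  finally show ?thesis .
qed


fun fcount :: "nat \<Rightarrow> nat \<Rightarrow> nat \<Rightarrow> nat" where
  "fcount a 0 w = 1"
| "fcount a (Suc n) 0 = 0"
| "fcount a (Suc n) (Suc w) = fcount a (Suc n) w + fcount a n (max (w + a) (2 * a - 1))"

lemma f_small:
  assumes "0 < a" "w \<le> a"
  shows "fcount a (Suc n) w = w * fcount a n (2 * a - 1)"
  using assms(2)
proof (induction w)
  case 0 then show ?case by simp
next
  case (Suc w)
  then have "max (w + a) (2 * a - 1) = 2 * a - 1" by auto
  then show ?case using Suc by simp
qed

lemma f_closed:
  assumes a: "0 < a"
  shows "a \<le> w \<Longrightarrow> fcount a n w = (a * n + w - a) choose n"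
proof (induction n arbitrary: w)
  case 0 then show ?case by simp
next
  case (Suc n)
  show ?case using Suc.prems
  proof (induction w rule: dec_induct)
    case base
    have "fcount a (Suc n) a = a * fcount a n (2 * a - 1)" using f_small[OF a] by simp
    also have "fcount a n (2 * a - 1) = (a * n + a - 1) choose n"
      using Suc.IH[of "2 * a - 1"] a by (simp add: algebra_simps)
    finally have e1: "fcount a (Suc n) a = a * ((a * n + a - 1) choose n)" .
    have "Suc n * ((a * n + a) choose Suc n) = (a * n + a) * ((a * n + a - 1) choose n)"
      by (rule binomial_absorption)
    also have "\<dots> = Suc n * (a * ((a * n + a - 1) choose n))" by (simp add: algebra_simps)
    finally have "(a * n + a) choose Suc n = a * ((a * n + a - 1) choose n)"
      by (simp only: mult_left_cancel)
    then show ?case using e1 by (simp add: algebra_simps)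
  next
    case (step w)
    have m: "max (w + a) (2 * a - 1) = w + a" using step by auto
    have "fcount a (Suc (Suc n) - 1) (Suc w) = fcount a (Suc n) w + fcount a n (w + a)"
      using m by simp
    also have "\<dots> = ((a * n + w) choose Suc n) + ((a * n + w) choose n)"
      using step.IH Suc.IH[of "w + a"] step.hyps by (simp add: algebra_simps)
    also have "\<dots> = Suc (a * n + w) choose Suc n" by simp
    finally show ?case using step.hyps by (simp add: algebra_simps)
  qed
qed


definition Win :: "nat \<Rightarrow> nat \<Rightarrow> int \<Rightarrow> nat \<Rightarrow> (int \<times> nat) set set" where
  "Win a n l w = {C. wfh a C \<and> card C = n \<and> base C \<subseteq> {l..<l + int w}}"

lemma wfh_base_ne:
  assumes w: "wfh a C" and ne: "C \<noteq> {}"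
  shows "base C \<noteq> {}"
proof -
  have fin: "finite C" and sp: "\<forall>x\<in>C. 0 < snd x \<longrightarrow> (\<exists>y\<in>C. snd y = snd x - 1 \<and> conc a (fst x) (fst y))"
    using w unfolding wfh_def by auto
  have "Min (snd ` C) \<in> snd ` C" using fin ne by auto
  then obtain x where x: "x \<in> C" "snd x = Min (snd ` C)" by auto
  have "snd x = 0"
  proof (rule ccontr)
    assume "snd x \<noteq> 0"
    then obtain y where "y \<in> C" "snd y = snd x - 1" using sp x by auto
    moreover have "Min (snd ` C) \<le> snd y" using fin calculation(1) by (intro Min_le) auto
    ultimately show False using \<open>snd x \<noteq> 0\<close> x(2) by simp
  qed
  then have "(fst x, 0) \<in> C" using x by (metis prod.collapse)
  then show ?thesis unfolding base_def by auto
qed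

lemma Win_zero: "Win a 0 l w = {{}}"
proof -
  have "C = {}" if "C \<in> Win a 0 l w" for C using that unfolding Win_def wfh_def by auto
  moreover have "{} \<in> Win a 0 l w" unfolding Win_def wfh_def dprio_def base_def by auto
  ultimately show ?thesis by blast
qed

lemma Win_Suc_0: "Win a (Suc n) l 0 = {}"
proof -
  have False if "C \<in> Win a (Suc n) l 0" for C
  proof -
    have "wfh a C" "card C = Suc n" "base C \<subseteq> {}" using that unfolding Win_def by auto
    moreover have "C \<noteq> {}" using calculation by auto
    ultimately show False using wfh_base_ne by blast
  qed
  then show ?thesis by blast
qed

lemma Win_step:
  fixes l :: int and w n :: nat
  assumes a: "0 < a"
  defines "r \<equiv> l + int w"
  defines "l' \<equiv> min l (r - int a + 1)"
  shows "Win a (Suc n) l (Suc w) = Win a (Suc n) l w \<union> Phi a r ` Win a n l' (max (w + a) (2 * a - 1))"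
    "Win a (Suc n) l w \<inter> Phi a r ` Win a n l' (max (w + a) (2 * a - 1)) = {}"
    "inj_on (Phi a r) (Win a n l' (max (w + a) (2 * a - 1)))"
proof -
  let ?w' = "max (w + a) (2 * a - 1)"
  have top: "l' + int ?w' = r + int a" unfolding l'_def r_def using a by (auto simp: min_def max_def)
  have ll: "l' \<le> l" "l' \<le> r - int a + 1" unfolding l'_def by auto
  have imgsub: "Phi a r H \<in> Win a (Suc n) l (Suc w) \<and> r \<in> base (Phi a r H)" if H: "H \<in> Win a n l' ?w'" for H
  proof -
    have w: "wfh a H" "card H = n" "base H \<subseteq> {l'..<l' + int ?w'}" using H unfolding Win_def by auto
    have b: "base (Phi a r H) = insert r {s \<in> base H. \<not> conc a r s}" using Phi_base[OF a w(1)] .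
    have "base (Phi a r H) \<subseteq> {l..<l + int (Suc w)}"
    proof
      fix s assume "s \<in> base (Phi a r H)"
      then have "s = r \<or> (s \<in> base H \<and> \<not> conc a r s)" using b by auto
      then show "s \<in> {l..<l + int (Suc w)}"
      proof
        assume "s = r" then show ?thesis unfolding r_def by simp
      next
        assume "s \<in> base H \<and> \<not> conc a r s"
        then have "l' \<le> s" "s < r + int a" "\<not> \<bar>r - s\<bar> < int a" using w(3) top unfolding conc_def by auto
        then have "s \<le> r - int a" by linarith
        then have "l \<le> s" using \<open>l' \<le> s\<close> unfolding l'_def by (auto simp: min_def split: if_splits)
        then show ?thesis using \<open>s \<le> r - int a\<close> a unfolding r_def by simp
      qed
    qed
    then show ?thesis using Phi_wfh[OF a w(1)] w b unfolding Win_def by auto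
  qed
  have bk: "Psi a r C \<in> Win a n l' ?w'" "Phi a r (Psi a r C) = C"
    if C: "C \<in> Win a (Suc n) l (Suc w)" "r \<in> base C" for C
  proof -
    have w: "wfh a C" "card C = Suc n" "base C \<subseteq> {l..<l + int (Suc w)}" using C unfolding Win_def by auto
    have r0: "(r, 0) \<in> C" using C unfolding base_def by auto
    have "base (Psi a r C) \<subseteq> {l'..<l' + int ?w'}"
    proof
      fix s assume "s \<in> base (Psi a r C)"
      then have "s \<in> (base C - {r}) \<or> conc a r s" using Psi_props(3)[OF a w(1) r0] by auto
      then show "s \<in> {l'..<l' + int ?w'}"
      proof
        assume "s \<in> base C - {r}"
        then have "l \<le> s" "s < r" using w(3) unfolding r_def by auto
        then show ?thesis using top ll a by auto
      next
        assume "conc a r s"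
        then show ?thesis using top ll unfolding conc_def by auto
      qed
    qed
    then show "Psi a r C \<in> Win a n l' ?w'" using Psi_props[OF a w(1) r0] w unfolding Win_def by auto
    show "Phi a r (Psi a r C) = C" using Phi_Psi[OF a w(1) r0] .
  qed
  show "Win a (Suc n) l (Suc w) = Win a (Suc n) l w \<union> Phi a r ` Win a n l' ?w'"
  proof (intro equalityI subsetI)
    fix C assume C: "C \<in> Win a (Suc n) l (Suc w)"
    show "C \<in> Win a (Suc n) l w \<union> Phi a r ` Win a n l' ?w'"
    proof (cases "r \<in> base C")
      case True
      then have "C = Phi a r (Psi a r C)" "Psi a r C \<in> Win a n l' ?w'" using bk[OF C] by auto
      then show ?thesis by blast
    next
      case False
      have "base C \<subseteq> {l..<l + int w}"
      proof
        fix s assume "s \<in> base C"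
        then have "s \<in> {l..<l + int (Suc w)}" "s \<noteq> r" using C False unfolding Win_def by auto
        then show "s \<in> {l..<l + int w}" unfolding r_def by auto
      qed
      then show ?thesis using C unfolding Win_def by auto
    qed
  next
    fix C assume "C \<in> Win a (Suc n) l w \<union> Phi a r ` Win a n l' ?w'"
    then show "C \<in> Win a (Suc n) l (Suc w)"
    proof
      assume "C \<in> Win a (Suc n) l w" then show ?thesis unfolding Win_def by auto
    next
      assume "C \<in> Phi a r ` Win a n l' ?w'" then show ?thesis using imgsub by auto
    qed
  qed
  show "Win a (Suc n) l w \<inter> Phi a r ` Win a n l' ?w' = {}"
  proof -
    have "r \<notin> base C" if "C \<in> Win a (Suc n) l w" for C using that unfolding Win_def r_def by auto
    then show ?thesis using imgsub by blast
  qed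
  show "inj_on (Phi a r) (Win a n l' ?w')"
  proof (rule inj_onI)
    fix H1 H2 assume h: "H1 \<in> Win a n l' ?w'" "H2 \<in> Win a n l' ?w'" "Phi a r H1 = Phi a r H2"
    have "wfh a H1" "wfh a H2" using h unfolding Win_def by auto
    then show "H1 = H2" using Psi_Phi[OF a] h(3) by metis
  qed
qed

lemma Win_count:
  assumes a: "0 < a"
  shows "finite (Win a n l w) \<and> card (Win a n l w) = fcount a n w"
proof (induction n arbitrary: l w)
  case 0 then show ?case by (simp add: Win_zero)
next
  case (Suc n)
  note IHn = Suc.IH
  show ?case
  proof (induction w arbitrary: l)
    case 0 then show ?case by (simp add: Win_Suc_0)
  next
    case (Suc w)
    let ?r = "l + int w"
    let ?l' = "min l (?r - int a + 1)"
    let ?w' = "max (w + a) (2 * a - 1)"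
    note st = Win_step[OF a, where l = l and w = w and n = n]
    have f1: "finite (Win a (Suc n) l w)" "card (Win a (Suc n) l w) = fcount a (Suc n) w" using Suc.IH by auto
    have f2: "finite (Win a n ?l' ?w')" "card (Win a n ?l' ?w') = fcount a n ?w'" using IHn by auto
    have f3: "finite (Phi a ?r ` Win a n ?l' ?w')" "card (Phi a ?r ` Win a n ?l' ?w') = fcount a n ?w'"
      using f2 card_image[OF st(3)] by auto
    show ?case
      unfolding st(1) using f1 f3 card_Un_disjoint[OF f1(1) f3(1) st(2)] by simp
  qed
qed


lemma pyramid_base: "pyramid C \<longleftrightarrow> base C = {0}"
proof -
  have e: "{p \<in> C. snd p = 0} = (\<lambda>s. (s, 0)) ` base C" unfolding base_def by force
  show ?thesis unfolding pyramid_def e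
  proof
    assume h: "(\<lambda>s. (s, 0::nat)) ` base C = {(0, 0)}"
    have "inj (\<lambda>s::int. (s, 0::nat))" by (rule injI) simp
    then show "base C = {0}" using h by (metis image_empty image_insert inj_image_eq_iff)
  qed simp
qed

theorem theorem1:
  fixes a m :: nat
  assumes "a \<ge> 2" and "m \<ge> 1"
  shows "card {C \<in> heaps a. pyramid C \<and> card C = m} = (a * m - 1) choose (m - 1)"
proof -
  have a: "0 < a" using assms by simp
  have "{C \<in> heaps a. pyramid C \<and> card C = m} = Win a m 0 1"
  proof (intro equalityI subsetI)
    fix C assume "C \<in> {C \<in> heaps a. pyramid C \<and> card C = m}"
    then show "C \<in> Win a m 0 1" unfolding Win_def heaps_wfh pyramid_base by auto
  next
    fix C assume C: "C \<in> Win a m 0 1"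
    then have w: "wfh a C" "card C = m" "base C \<subseteq> {0}" unfolding Win_def by auto
    then have "C \<noteq> {}" using assms by auto
    then have "base C \<noteq> {}" using wfh_base_ne w by blast
    then have "base C = {0}" using w by blast
    then show "C \<in> {C \<in> heaps a. pyramid C \<and> card C = m}" using w unfolding heaps_wfh pyramid_base by auto
  qed
  then have c: "card {C \<in> heaps a. pyramid C \<and> card C = m} = fcount a m 1" using Win_count[OF a] by simp
  obtain n where n: "m = Suc n" using assms by (cases m) auto
  have mx: "max (0 + a) (2 * a - 1) = 2 * a - 1" using a by simp
  have "fcount a m 1 = fcount a n (2 * a - 1)" using n mx by simp
  also have "\<dots> = (a * n + (2 * a - 1) - a) choose n" using f_closed[OF a] a by simp
  also have "\<dots> = (a * m - 1) choose (m - 1)" using n a by (simp add: algebra_simps)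
  finally have "fcount a m 1 = (a * m - 1) choose (m - 1)" .
  then show ?thesis using c by simp
qed

end
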